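(* Let $\mathbf s\sim\mathbb{Z}_2^{4n^2}$ be uniform, let $\mathbf A\in\mathbb{Z}_2^{2n\times n}$ be a uniformly random full-rank isotropic matrix, and let $\mathcal A$ be a deterministic polynomial-time algorithm for which there is a randomized polynomial-time algorithm $\mathcal B$ such that $\mathcal A(\mathbf s)$ is statistically indistinguishable from $\mathbf A$, $\mathcal B(\mathbf A)$ is statistically indistinguishable from $\mathbf s$, and $\Pr[\mathcal A(\mathcal B(\mathbf A))=\mathbf A]=1-\mathrm{negl}(n)$. Fix any randomized algorithms $\mathcal A_1,\mathcal A_2$ with outputs in $\{0,1\}^m$, $m=\mathrm{poly}(n)$. If $(\mathbf A,\mathcal A_1(\mathbf A))$ is computationally indistinguishable from $(\mathbf A,\mathcal A_2(\mathbf A))$, then $(\mathbf s,\mathcal A_1(\mathcal A(\mathbf s)))$ and $(\mathbf s,\mathcal A_2(\mathcal A(\mathbf s)))$ are computationally indistinguishable.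
   Context: Symplectic inner product on $\mathbb{Z}_2^{2n}$: $(\mathbf a,\mathbf b)\odot(\mathbf a',\mathbf b')=\mathbf a\cdot\mathbf b'+\mathbf a'\cdot\mathbf b\pmod2$. A uniformly random full-rank isotropic matrix in $\mathbb{Z}_2^{2n\times n}$ is uniform among matrices of column rank $n$ with pairwise symplectically orthogonal columns. Statistically indistinguishable: total variation distance $\mathrm{negl}(n)$. Computationally indistinguishable: no polynomial-time (quantum or classical) distinguisher has non-negligible advantage. *)

theory Defs
  imports "HOL-Probability.Probability"
begin

text \<open>Binary matrices in Z_2^{2n x n} are represented as lists of 2n nr,
  each row a bool list of length n; entry (r,j) is M ! r ! j.
  Bit strings in {0,1}^k are bool lists of length k.\<close>

definition is_matrix :: "nat \<Rightarrow> nat \<Rightarrow> bool list list \<Rightarrow> bool" where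
  "is_matrix nr nc M \<longleftrightarrow> length M = nr \<and> (\<forall>r\<in>set M. length r = nc)"

text \<open>Symplectic inner product of columns j and k of a 2n x n matrix:
  column j is (a,b) with a_i = M!i!j and b_i = M!(n+i)!j (i < n).\<close>
definition symp_col :: "nat \<Rightarrow> bool list list \<Rightarrow> nat \<Rightarrow> nat \<Rightarrow> bool" where
  "symp_col n M j k \<longleftrightarrow>
     odd (\<Sum>i<n. of_bool (M!i!j \<and> M!(n+i)!k) + of_bool (M!i!k \<and> M!(n+i)!j) :: nat)"

text \<open>Column rank n over Z_2: columns linearly independent, i.e. no nonempty
  set of columns sums to zero.\<close>
definition full_col_rank :: "nat \<Rightarrow> nat \<Rightarrow> bool list list \<Rightarrow> bool" where
  "full_col_rank nr nc M \<longleftrightarrow>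
     (\<forall>S. S \<subseteq> {..<nc} \<longrightarrow> S \<noteq> {} \<longrightarrow> (\<exists>r<nr. odd (card {j\<in>S. M!r!j})))"

definition isotropic_fullrank :: "nat \<Rightarrow> bool list list set" where
  "isotropic_fullrank n = {M. is_matrix (2*n) n M \<and> full_col_rank (2*n) n M \<and>
       (\<forall>j<n. \<forall>k<n. \<not> symp_col n M j k)}"

definition rand_iso :: "nat \<Rightarrow> bool list list pmf" where
  "rand_iso n = pmf_of_set (isotropic_fullrank n)"

definition rand_seed :: "nat \<Rightarrow> bool list pmf" where
  "rand_seed n = pmf_of_set {xs. length xs = 4 * n^2}"

definition negligible :: "(nat \<Rightarrow> real) \<Rightarrow> bool" where
  "negligible f \<longleftrightarrow> (\<forall>c::nat. (\<lambda>n. \<bar>f n\<bar> * real n ^ c) \<longlonglongrightarrow> 0)"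

definition tvd :: "'a pmf \<Rightarrow> 'a pmf \<Rightarrow> real" where
  "tvd p q = (SUP X. \<bar>measure_pmf.prob p X - measure_pmf.prob q X\<bar>)"

definition stat_indist :: "(nat \<Rightarrow> 'a pmf) \<Rightarrow> (nat \<Rightarrow> 'a pmf) \<Rightarrow> bool" where
  "stat_indist X Y \<longleftrightarrow> negligible (\<lambda>n. tvd (X n) (Y n))"

text \<open>Computational indistinguishability relative to a class Dist of admissible
  (polynomial-time, possibly quantum) distinguisher families; a distinguisher is
  modelled by its output distribution on each input.\<close>
definition comp_indist ::
  "(nat \<Rightarrow> 'a \<Rightarrow> bool pmf) set \<Rightarrow> (nat \<Rightarrow> 'a pmf) \<Rightarrow> (nat \<Rightarrow> 'a pmf) \<Rightarrow> bool" where
  "comp_indist Dist X Y \<longleftrightarrow>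
     (\<forall>D\<in>Dist. negligible (\<lambda>n. \<bar>pmf (X n \<bind> D n) True - pmf (Y n \<bind> D n) True\<bar>))"

definition poly_bounded :: "(nat \<Rightarrow> nat) \<Rightarrow> bool" where
  "poly_bounded m \<longleftrightarrow> (\<exists>c k. \<forall>n. m n \<le> c * n ^ k + c)"

end

theory Submission
  imports Defs
begin
no_notation Infinite_Sum.abs_summable_on (infixr \<open>abs'_summable'_on\<close> 46)

lemma exp_infsetsum:
  fixes \<phi> :: "'a \<Rightarrow> real"
  shows "measure_pmf.expectation p \<phi> = infsetsum (\<lambda>x. pmf p x * \<phi> x) UNIV"
  unfolding measure_pmf_eq_density infsetsum_def
  by (subst integral_density) (auto simp: pmf_nonneg)

lemma tvd_upper:
  "\<bar>measure_pmf.prob p X - measure_pmf.prob q X\<bar> \<le> tvd p q"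
  unfolding tvd_def
proof (rule cSUP_upper)
  show "bdd_above (range (\<lambda>X. \<bar>measure_pmf.prob p X - measure_pmf.prob q X\<bar>))"
  proof (rule bdd_aboveI)
    fix y assume "y \<in> range (\<lambda>X. \<bar>measure_pmf.prob p X - measure_pmf.prob q X\<bar>)"
    then obtain X where "y = \<bar>measure_pmf.prob p X - measure_pmf.prob q X\<bar>" by auto
    then show "y \<le> 1"
      using measure_pmf.prob_le_1[of p X] measure_pmf.prob_le_1[of q X]
        measure_nonneg[of p X] measure_nonneg[of q X] by linarith
  qed
qed simp

lemma tvd_exp_le:
  fixes \<phi> :: "'a \<Rightarrow> real"
  assumes "\<And>x. 0 \<le> \<phi> x" "\<And>x. \<phi> x \<le> 1"
  shows "measure_pmf.expectation p \<phi> - measure_pmf.expectation q \<phi> \<le> tvd p q"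
proof -
  define X where "X = {x. pmf q x < pmf p x}"
  have sp: "(\<lambda>x. pmf p x * \<phi> x) abs_summable_on A" for p :: "'a pmf" and A
    by (rule abs_summable_on_comparison_test'[OF pmf_abs_summable])
       (use assms in \<open>auto simp: abs_mult pmf_nonneg intro: mult_left_le\<close>)
  have sd: "(\<lambda>x. pmf p x * \<phi> x - pmf q x * \<phi> x) abs_summable_on A" for A
    using sp[of p A] sp[of q A] by (intro abs_summable_on_diff)
  have sd2: "(\<lambda>x. pmf p x - pmf q x) abs_summable_on A" for A
    by (intro abs_summable_on_diff pmf_abs_summable)
  have "measure_pmf.expectation p \<phi> - measure_pmf.expectation q \<phi>
      = infsetsum (\<lambda>x. pmf p x * \<phi> x - pmf q x * \<phi> x) UNIV"
    unfolding exp_infsetsum by (rule infsetsum_diff[symmetric]) (rule sp)+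
  also have "UNIV = X \<union> (-X)" by auto
  also have "infsetsum (\<lambda>x. pmf p x * \<phi> x - pmf q x * \<phi> x) (X \<union> -X)
     = infsetsum (\<lambda>x. pmf p x * \<phi> x - pmf q x * \<phi> x) X
       + infsetsum (\<lambda>x. pmf p x * \<phi> x - pmf q x * \<phi> x) (-X)"
    by (rule infsetsum_Un_disjoint) (auto intro: sd)
  also have "infsetsum (\<lambda>x. pmf p x * \<phi> x - pmf q x * \<phi> x) X
      \<le> infsetsum (\<lambda>x. pmf p x - pmf q x) X"
  proof (rule infsetsum_mono[OF sd sd2])
    fix x assume "x \<in> X"
    then have "0 \<le> pmf p x - pmf q x" by (auto simp: X_def)
    then have "(pmf p x - pmf q x) * \<phi> x \<le> (pmf p x - pmf q x)"
      using assms by (intro mult_left_le) auto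
    then show "pmf p x * \<phi> x - pmf q x * \<phi> x \<le> pmf p x - pmf q x"
      by (simp add: algebra_simps)
  qed
  also have "infsetsum (\<lambda>x. pmf p x * \<phi> x - pmf q x * \<phi> x) (-X) \<le> infsetsum (\<lambda>x. 0) (-X)"
  proof (rule infsetsum_mono[OF sd])
    fix x assume "x \<in> -X"
    then have "pmf p x - pmf q x \<le> 0" by (auto simp: X_def)
    then have "(pmf p x - pmf q x) * \<phi> x \<le> 0"
      using assms by (intro mult_nonpos_nonneg) auto
    then show "pmf p x * \<phi> x - pmf q x * \<phi> x \<le> 0"
      by (simp add: algebra_simps)
  qed simp
  also have "infsetsum (\<lambda>x. pmf p x - pmf q x) X + infsetsum (\<lambda>x. 0) (-X)
     = measure_pmf.prob p X - measure_pmf.prob q X"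
    by (simp add: infsetsum_diff[OF pmf_abs_summable pmf_abs_summable] measure_pmf_conv_infsetsum)
  also have "\<dots> \<le> tvd p q" using tvd_upper[of p X q] by linarith
  finally show ?thesis by simp
qed

lemma integrable_01:
  fixes \<phi> :: "'a \<Rightarrow> real"
  assumes "\<And>x. 0 \<le> \<phi> x" "\<And>x. \<phi> x \<le> 1"
  shows "integrable (measure_pmf p) \<phi>"
  by (rule measure_pmf.integrable_const_bound[where B=1]) (use assms in auto)

lemma tvd_exp_abs:
  fixes \<phi> :: "'a \<Rightarrow> real"
  assumes "\<And>x. 0 \<le> \<phi> x" "\<And>x. \<phi> x \<le> 1"
  shows "\<bar>measure_pmf.expectation p \<phi> - measure_pmf.expectation q \<phi>\<bar> \<le> tvd p q"
proof -
  have a: "measure_pmf.expectation p \<phi> - measure_pmf.expectation q \<phi> \<le> tvd p q"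
    by (rule tvd_exp_le) (use assms in auto)
  have b: "measure_pmf.expectation p (\<lambda>x. 1 - \<phi> x) - measure_pmf.expectation q (\<lambda>x. 1 - \<phi> x) \<le> tvd p q"
    by (rule tvd_exp_le) (use assms in auto)
  have "measure_pmf.expectation r (\<lambda>x. 1 - \<phi> x) = 1 - measure_pmf.expectation r \<phi>" for r
    using integrable_01[OF assms, of r] by (simp add: Bochner_Integration.integral_diff)
  with a b show ?thesis by simp
qed

lemma negl_add: "negligible g \<Longrightarrow> negligible h \<Longrightarrow> negligible (\<lambda>n. g n + h n)"
  unfolding negligible_def
proof (intro allI)
  fix c assume g: "\<forall>c. (\<lambda>n. \<bar>g n\<bar> * real n ^ c) \<longlonglongrightarrow> 0" and h: "\<forall>c. (\<lambda>n. \<bar>h n\<bar> * real n ^ c) \<longlonglongrightarrow> 0"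
  have t: "(\<lambda>n. \<bar>g n\<bar> * real n ^ c + \<bar>h n\<bar> * real n ^ c) \<longlonglongrightarrow> 0"
    using tendsto_add[OF g[rule_format, of c] h[rule_format, of c]] by simp
  show "(\<lambda>n. \<bar>g n + h n\<bar> * real n ^ c) \<longlonglongrightarrow> 0"
  proof (rule tendsto_sandwich[OF _ _ tendsto_const t])
    show "\<forall>\<^sub>F n in sequentially. 0 \<le> \<bar>g n + h n\<bar> * real n ^ c" by simp
    show "\<forall>\<^sub>F n in sequentially. \<bar>g n + h n\<bar> * real n ^ c \<le> \<bar>g n\<bar> * real n ^ c + \<bar>h n\<bar> * real n ^ c"
      by (intro always_eventually allI, simp add: distrib_right[symmetric] mult_right_mono abs_triangle_ineq)
  qed
qed

lemma negl_mono: "negligible g \<Longrightarrow> (\<And>n. \<bar>f n\<bar> \<le> g n) \<Longrightarrow> negligible f"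
  unfolding negligible_def
proof (intro allI)
  fix c assume g: "\<forall>c. (\<lambda>n. \<bar>g n\<bar> * real n ^ c) \<longlonglongrightarrow> 0" and le: "\<And>n. \<bar>f n\<bar> \<le> g n"
  show "(\<lambda>n. \<bar>f n\<bar> * real n ^ c) \<longlonglongrightarrow> 0"
  proof (rule tendsto_sandwich[OF _ _ tendsto_const g[rule_format, of c]])
    show "\<forall>\<^sub>F n in sequentially. 0 \<le> \<bar>f n\<bar> * real n ^ c" by simp
    show "\<forall>\<^sub>F n in sequentially. \<bar>f n\<bar> * real n ^ c \<le> \<bar>g n\<bar> * real n ^ c"
      by (intro always_eventually allI mult_right_mono) (use le in \<open>force intro: order_trans[OF _ abs_ge_self]\<close>)+
  qed
qed

lemma hybrid:
  fixes seed :: "'s pmf" and iso :: "'m pmf" and A :: "'s \<Rightarrow> 'm" and B :: "'m \<Rightarrow> 's pmf"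
    and C :: "'m \<Rightarrow> 'y pmf" and D :: "'s \<times> 'y \<Rightarrow> bool pmf"
  shows "\<bar>pmf ((seed \<bind> (\<lambda>s. map_pmf (\<lambda>y. (s, y)) (C (A s)))) \<bind> D) True
          - pmf ((iso \<bind> (\<lambda>M. map_pmf (\<lambda>y. (M, y)) (C M))) \<bind> (\<lambda>(M, y). B M \<bind> (\<lambda>s. D (s, y)))) True\<bar>
         \<le> tvd (iso \<bind> B) seed
           + (1 - measure_pmf.prob (iso \<bind> (\<lambda>M. map_pmf (\<lambda>s. A s = M) (B M))) {True})"
proof -
  define \<phi> where "\<phi> s = pmf (C (A s) \<bind> (\<lambda>y. D (s, y))) True" for s
  define \<psi> where "\<psi> z = pmf (C (fst z) \<bind> (\<lambda>y. D (snd z, y))) True" for z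
  define J where "J = iso \<bind> (\<lambda>M. map_pmf (\<lambda>s. (M, s)) (B M))"
  define G where "G = {z. A (snd z) \<noteq> fst z}"
  have b\<phi>: "0 \<le> \<phi> s" "\<phi> s \<le> 1" for s unfolding \<phi>_def by (auto simp: pmf_le_1)
  have b\<psi>: "0 \<le> \<psi> s" "\<psi> s \<le> 1" for s unfolding \<psi>_def by (auto simp: pmf_le_1)
  have e1: "pmf ((seed \<bind> (\<lambda>s. map_pmf (\<lambda>y. (s, y)) (C (A s)))) \<bind> D) True
      = measure_pmf.expectation seed \<phi>"
    unfolding \<phi>_def by (simp add: map_pmf_def bind_assoc_pmf bind_return_pmf pmf_bind)
  have "(iso \<bind> (\<lambda>M. map_pmf (\<lambda>y. (M, y)) (C M))) \<bind> (\<lambda>(M, y). B M \<bind> (\<lambda>s. D (s, y)))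
      = J \<bind> (\<lambda>z. C (fst z) \<bind> (\<lambda>y. D (snd z, y)))"
    unfolding J_def
    by (simp add: map_pmf_def bind_assoc_pmf bind_return_pmf, subst bind_commute_pmf, rule refl)
  then have e2: "pmf ((iso \<bind> (\<lambda>M. map_pmf (\<lambda>y. (M, y)) (C M))) \<bind> (\<lambda>(M, y). B M \<bind> (\<lambda>s. D (s, y)))) True
      = measure_pmf.expectation J \<psi>"
    unfolding \<psi>_def by (simp add: pmf_bind)
  have mJ: "map_pmf snd J = iso \<bind> B"
    unfolding J_def by (simp add: map_bind_pmf map_pmf_comp)
  have e3: "measure_pmf.expectation J (\<lambda>z. \<phi> (snd z)) = measure_pmf.expectation (iso \<bind> B) \<phi>"
    by (simp flip: mJ)
  have i1: "integrable (measure_pmf J) (\<lambda>z. \<phi> (snd z))" by (rule integrable_01) (use b\<phi> in auto)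
  have i2: "integrable (measure_pmf J) \<psi>" by (rule integrable_01) (use b\<psi> in auto)
  have i3: "integrable (measure_pmf J) (indicator G :: _ \<Rightarrow> real)" by (rule integrable_01) (auto split: split_indicator)
  have "\<bar>measure_pmf.expectation J (\<lambda>z. \<phi> (snd z)) - measure_pmf.expectation J \<psi>\<bar>
      = \<bar>measure_pmf.expectation J (\<lambda>z. \<phi> (snd z) - \<psi> z)\<bar>"
    using i1 i2 by (simp add: Bochner_Integration.integral_diff)
  also have "\<dots> \<le> measure_pmf.expectation J (\<lambda>z. \<bar>\<phi> (snd z) - \<psi> z\<bar>)"
    by (rule integral_abs_bound)
  also have "\<dots> \<le> measure_pmf.expectation J (indicator G)"
  proof (rule integral_mono)
    show "integrable (measure_pmf J) (\<lambda>z. \<bar>\<phi> (snd z) - \<psi> z\<bar>)"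
      using i1 i2 by auto
    show "integrable (measure_pmf J) (indicator G :: _ \<Rightarrow> real)" by (rule i3)
    fix z
    show "\<bar>\<phi> (snd z) - \<psi> z\<bar> \<le> indicator G z"
    proof (cases "z \<in> G")
      case True then show ?thesis using b\<phi>[of "snd z"] b\<psi>[of z] by (simp add: abs_le_iff)
    next
      case False then show ?thesis by (simp add: G_def \<phi>_def \<psi>_def)
    qed
  qed
  also have "\<dots> = measure_pmf.prob J G" by simp
  also have "\<dots> = 1 - measure_pmf.prob J (-G)"
    using measure_pmf.prob_compl[of "-G" J] by simp
  also have "measure_pmf.prob J (-G) = measure_pmf.prob (iso \<bind> (\<lambda>M. map_pmf (\<lambda>s. A s = M) (B M))) {True}"
  proof -
    have "iso \<bind> (\<lambda>M. map_pmf (\<lambda>s. A s = M) (B M)) = map_pmf (\<lambda>z. A (snd z) = fst z) J"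
      unfolding J_def by (simp add: map_bind_pmf map_pmf_comp)
    moreover have "(\<lambda>z. A (snd z) = fst z) -` {True} = -G" by (auto simp: G_def)
    ultimately show ?thesis by simp
  qed
  finally have h2: "\<bar>measure_pmf.expectation J (\<lambda>z. \<phi> (snd z)) - measure_pmf.expectation J \<psi>\<bar>
      \<le> 1 - measure_pmf.prob (iso \<bind> (\<lambda>M. map_pmf (\<lambda>s. A s = M) (B M))) {True}" .
  have h1: "\<bar>measure_pmf.expectation (iso \<bind> B) \<phi> - measure_pmf.expectation seed \<phi>\<bar> \<le> tvd (iso \<bind> B) seed"
    by (rule tvd_exp_abs) (use b\<phi> in auto)
  show ?thesis unfolding e1 e2 using h1 h2 e3 by linarith
qed

theorem corollary6p3:
  fixes PT_det :: "(nat \<Rightarrow> bool list \<Rightarrow> bool list list) set"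
    and PT_rand :: "(nat \<Rightarrow> bool list list \<Rightarrow> bool list pmf) set"
    and DistS :: "(nat \<Rightarrow> bool list \<times> bool list \<Rightarrow> bool pmf) set"
    and DistA :: "(nat \<Rightarrow> bool list list \<times> bool list \<Rightarrow> bool pmf) set"
    and \<A> :: "nat \<Rightarrow> bool list \<Rightarrow> bool list list"
    and \<B> :: "nat \<Rightarrow> bool list list \<Rightarrow> bool list pmf"
    and A1 A2 :: "nat \<Rightarrow> bool list list \<Rightarrow> bool list pmf"
    and m :: "nat \<Rightarrow> nat"
  assumes reduction_closed:
      "\<And>B D. B \<in> PT_rand \<Longrightarrow> D \<in> DistS \<Longrightarrow>
         (\<lambda>n (M, y). B n M \<bind> (\<lambda>s. D n (s, y))) \<in> DistA"
    and A_eff: "\<A> \<in> PT_det"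
    and B_eff: "\<B> \<in> PT_rand"
    and A_stat: "stat_indist (\<lambda>n. map_pmf (\<A> n) (rand_seed n)) rand_iso"
    and B_stat: "stat_indist (\<lambda>n. rand_iso n \<bind> \<B> n) rand_seed"
    and AB_inv: "negligible (\<lambda>n. 1 - measure_pmf.prob
                    (rand_iso n \<bind> (\<lambda>M. map_pmf (\<lambda>s. \<A> n s = M) (\<B> n M))) {True})"
    and m_poly: "poly_bounded m"
    and A1_out: "\<And>n M. set_pmf (A1 n M) \<subseteq> {ys. length ys = m n}"
    and A2_out: "\<And>n M. set_pmf (A2 n M) \<subseteq> {ys. length ys = m n}"
    and hyp: "comp_indist DistA
               (\<lambda>n. rand_iso n \<bind> (\<lambda>M. map_pmf (\<lambda>y. (M, y)) (A1 n M)))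
               (\<lambda>n. rand_iso n \<bind> (\<lambda>M. map_pmf (\<lambda>y. (M, y)) (A2 n M)))"
  shows "comp_indist DistS
               (\<lambda>n. rand_seed n \<bind> (\<lambda>s. map_pmf (\<lambda>y. (s, y)) (A1 n (\<A> n s))))
               (\<lambda>n. rand_seed n \<bind> (\<lambda>s. map_pmf (\<lambda>y. (s, y)) (A2 n (\<A> n s))))"
  proof (unfold comp_indist_def, intro ballI)
  fix D assume D: "D \<in> DistS"
  define D' where "D' = (\<lambda>n (M, y). \<B> n M \<bind> (\<lambda>s. D n (s, y)))"
  have D'A: "D' \<in> DistA" unfolding D'_def by (rule reduction_closed[OF B_eff D])
  define T where "T n = tvd (rand_iso n \<bind> \<B> n) (rand_seed n)" for n
  define E where "E n = 1 - measure_pmf.prob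
                    (rand_iso n \<bind> (\<lambda>M. map_pmf (\<lambda>s. \<A> n s = M) (\<B> n M))) {True}" for n
  define H where "H n = \<bar>pmf ((rand_iso n \<bind> (\<lambda>M. map_pmf (\<lambda>y. (M, y)) (A1 n M))) \<bind> D' n) True
      - pmf ((rand_iso n \<bind> (\<lambda>M. map_pmf (\<lambda>y. (M, y)) (A2 n M))) \<bind> D' n) True\<bar>" for n
  have nT: "negligible T" using B_stat unfolding stat_indist_def T_def .
  have nE: "negligible E" using AB_inv unfolding E_def .
  have nH: "negligible H" using hyp D'A unfolding comp_indist_def H_def by blast
  have "negligible (\<lambda>n. (T n + E n) + ((T n + E n) + H n))"
    by (intro negl_add nT nE nH)
  then show "negligible (\<lambda>n. \<bar>pmf (rand_seed n \<bind> (\<lambda>s. map_pmf (\<lambda>y. (s, y)) (A1 n (\<A> n s))) \<bind> D n) True -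
                    pmf (rand_seed n \<bind> (\<lambda>s. map_pmf (\<lambda>y. (s, y)) (A2 n (\<A> n s))) \<bind> D n) True\<bar>)"
  proof (rule negl_mono)
    fix n
    have 1: "\<bar>pmf (rand_seed n \<bind> (\<lambda>s. map_pmf (\<lambda>y. (s, y)) (A1 n (\<A> n s))) \<bind> D n) True
        - pmf ((rand_iso n \<bind> (\<lambda>M. map_pmf (\<lambda>y. (M, y)) (A1 n M))) \<bind> D' n) True\<bar> \<le> T n + E n"
      unfolding T_def E_def D'_def by (rule hybrid)
    have 2: "\<bar>pmf (rand_seed n \<bind> (\<lambda>s. map_pmf (\<lambda>y. (s, y)) (A2 n (\<A> n s))) \<bind> D n) True
        - pmf ((rand_iso n \<bind> (\<lambda>M. map_pmf (\<lambda>y. (M, y)) (A2 n M))) \<bind> D' n) True\<bar> \<le> T n + E n"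
      unfolding T_def E_def D'_def by (rule hybrid)
    show "\<bar>\<bar>pmf (rand_seed n \<bind> (\<lambda>s. map_pmf (\<lambda>y. (s, y)) (A1 n (\<A> n s))) \<bind> D n) True -
                    pmf (rand_seed n \<bind> (\<lambda>s. map_pmf (\<lambda>y. (s, y)) (A2 n (\<A> n s))) \<bind> D n) True\<bar>\<bar>
          \<le> (T n + E n) + ((T n + E n) + H n)"
      using 1 2 unfolding H_def by linarith
  qed
qed

end
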